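(* Let $\mu_1,\mu_2$ be compactly supported positive Borel measures on $\mathbb{C}$, with $\mu_2$ having infinite support, such that $\beta(\mu_1,\mu_2)<\infty$. Then $\operatorname{supp}(\mu_1)\subset \operatorname{Pc}(\operatorname{supp}(\mu_2))$.
   Context: For positive Borel measures $\mu_1,\mu_2$ on $\mathbb{C}$ with finite moments and $\mu_2$ infinitely supported, $\beta(\mu_1,\mu_2)=\sup\{\int|p|^2d\mu_1/\int|p|^2d\mu_2 : p\in\mathbb{P}[z]\setminus\{0\}\}\in(0,\infty]$ (equivalently, the limit of the largest generalized eigenvalues of the $(n+1)\times(n+1)$ truncations of $\mathbf{M}(\mu_1)$ with respect to those of $\mathbf{M}(\mu_2)$, where $\mathbf{M}(\mu)=(\int z^i\bar z^jd\mu)_{i,j\ge0}$). For a compact $K\subset\mathbb{C}$, its polynomially convex hull is $\operatorname{Pc}(K)=\{z\in\mathbb{C}: |p(z)|\le\max_{\xi\in K}|p(\xi)| \text{ for all } p\in\mathbb{P}[z]\}$. *)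

theory Defs
  imports "HOL-Analysis.Analysis" "HOL-Computational_Algebra.Polynomial"
begin

definition msupp :: "complex measure \<Rightarrow> complex set" where
  "msupp M = {z. \<forall>e>0. emeasure M (ball z e) > 0}"

definition beta :: "complex measure \<Rightarrow> complex measure \<Rightarrow> ennreal" where
  "beta M1 M2 = (SUP p\<in>{p::complex poly. p \<noteq> 0}.
      (\<integral>\<^sup>+ z. ennreal ((cmod (poly p z))\<^sup>2) \<partial>M1) /
      (\<integral>\<^sup>+ z. ennreal ((cmod (poly p z))\<^sup>2) \<partial>M2))"

definition Pc :: "complex set \<Rightarrow> complex set" where
  "Pc K = {z. \<forall>p::complex poly. cmod (poly p z) \<le> (SUP \<xi>\<in>K. cmod (poly p \<xi>))}"

end

theory Submission
  imports Defs
begin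

lemma div_le_imp:
  fixes a b c :: ennreal
  assumes "a / c \<le> b" "c \<noteq> top" "b \<noteq> top"
  shows "a \<le> b * c"
proof (cases "c = 0")
  case True
  then show ?thesis using assms by (auto simp: ennreal_divide_zero split: if_splits simp: top_unique)
next
  case False
  have "a = a / c * c" using False assms(2)
    by (simp add: ennreal_divide_times ennreal_times_divide mult_divide_eq_ennreal)
  also have "\<dots> \<le> b * c" using assms(1) by (intro mult_right_mono) auto
  finally show ?thesis .
qed

lemma ae_supp:
  fixes M :: "complex measure"
  assumes "sets M = sets borel"
  shows "AE z in M. z \<in> msupp M"
proof -
  define F where "F = {ball z e |z e. e > 0 \<and> emeasure M (ball z e) = 0}"
  have op: "\<And>S. S \<in> F \<Longrightarrow> open S" unfolding F_def by auto
  obtain F' where F': "F' \<subseteq> F" "countable F'" "\<Union>F' = \<Union>F"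
    using Lindelof[OF op] by blast
  have "\<Union>F' \<in> null_sets M"
  proof -
    have "\<Union>(id ` F') \<in> null_sets M"
    proof (rule null_sets_UN')
      show "countable F'" by fact
      fix S assume "S \<in> F'"
      then have "S \<in> F" using F' by auto
      then obtain z e where "S = ball z e" "emeasure M S = 0" unfolding F_def by auto
      then show "id S \<in> null_sets M" using assms by (auto simp: null_sets_def)
    qed
    then show ?thesis by simp
  qed
  moreover have "{x \<in> space M. \<not> x \<in> msupp M} \<subseteq> \<Union>F'"
  proof
    fix x assume "x \<in> {x \<in> space M. \<not> x \<in> msupp M}"
    then obtain e where "e > 0" "\<not> emeasure M (ball x e) > 0" unfolding msupp_def by auto
    then have "ball x e \<in> F" unfolding F_def by (auto simp: not_less)
    then have "x \<in> \<Union>F" using \<open>e>0\<close> centre_in_ball by blast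
    then show "x \<in> \<Union>F'" using F' by simp
  qed
  ultimately show ?thesis by (rule AE_I')
qed

theorem theorem1:
  fixes M1 M2 :: "complex measure"
  assumes "sets M1 = sets borel" and "sets M2 = sets borel"
    and "emeasure M1 (space M1) < \<infinity>" and "emeasure M2 (space M2) < \<infinity>"
    and "compact (msupp M1)" and "compact (msupp M2)"
    and "infinite (msupp M2)"
    and "beta M1 M2 < \<infinity>"
  shows "msupp M1 \<subseteq> Pc (msupp M2)"
proof
  fix z0 assume z0: "z0 \<in> msupp M1"
  show "z0 \<in> Pc (msupp M2)"
  proof (rule ccontr)
    assume "z0 \<notin> Pc (msupp M2)"
    then obtain p where p: "cmod (poly p z0) > (SUP \<xi>\<in>msupp M2. cmod (poly p \<xi>))"
      unfolding Pc_def by (auto simp: not_le)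
    define K where "K = msupp M2"
    define s where "s = (SUP \<xi>\<in>K. cmod (poly p \<xi>))"
    have Kne: "K \<noteq> {}" using assms(7) K_def by auto
    have bdd: "bdd_above ((\<lambda>\<xi>. cmod (poly p \<xi>)) ` K)"
      unfolding K_def
      by (intro compact_imp_bounded[THEN bounded_imp_bdd_above] compact_continuous_image
          continuous_intros assms(6))
    have sK: "\<And>z. z \<in> K \<Longrightarrow> cmod (poly p z) \<le> s"
      unfolding s_def using bdd by (intro cSUP_upper) auto
    have s0: "s \<ge> 0" using Kne sK norm_ge_zero order_trans by blast
    have ps: "cmod (poly p z0) > s" using p unfolding s_def K_def .
    define d where "d = (cmod (poly p z0) - s) / 3"
    have d0: "d > 0" using ps unfolding d_def by auto
    define r where "r = s + 2 * d"
    define t where "t = s + d"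
    have t0: "t > 0" "r > t" "r < cmod (poly p z0)" using s0 d0 ps unfolding t_def r_def d_def by (auto simp: field_simps)
    have "open {z. cmod (poly p z) > r}"
      by (intro open_Collect_less continuous_intros)
    moreover have "z0 \<in> {z. cmod (poly p z) > r}" using t0 by auto
    ultimately obtain e where e: "e > 0" "ball z0 e \<subseteq> {z. cmod (poly p z) > r}"
      using open_contains_ball by blast
    define \<delta> where "\<delta> = emeasure M1 (ball z0 e)"
    have d_pos: "\<delta> > 0" using z0 e unfolding msupp_def \<delta>_def by auto
    have ballM: "ball z0 e \<in> sets M1" using assms(1) by auto
    have d_fin: "\<delta> < top" unfolding \<delta>_def
      using assms(3) emeasure_space[of M1 "ball z0 e"] by (auto simp: less_le_trans)
    have pnz: "p \<noteq> 0" using ps s0 by auto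
    have sp2: "space M2 = UNIV" using sets_eq_imp_space_eq[OF assms(2)] by simp
    obtain Bv where Bv: "beta M1 M2 = ennreal Bv" "Bv \<ge> 0"
      using assms(8) by (cases "beta M1 M2") (auto simp: top_unique)
    obtain Mv where Mv: "emeasure M2 (space M2) = ennreal Mv" "Mv \<ge> 0"
      using assms(4) by (cases "emeasure M2 (space M2)") (auto simp: top_unique)
    obtain D where D: "\<delta> = ennreal D" "D > 0"
      using d_fin d_pos by (cases \<delta>) (auto simp: top_unique)
    have key: "r ^ (2*n) * D \<le> Bv * (t ^ (2*n) * Mv)" for n
    proof -
      define a where "a = (\<integral>\<^sup>+ z. ennreal ((cmod (poly (p^n) z))\<^sup>2) \<partial>M1)"
      define c where "c = (\<integral>\<^sup>+ z. ennreal ((cmod (poly (p^n) z))\<^sup>2) \<partial>M2)"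
      have "p ^ n \<noteq> 0" using pnz by simp
      then have "a / c \<le> beta M1 M2" unfolding beta_def a_def c_def
        by (intro SUP_upper) auto
      have la: "ennreal (r ^ (2*n)) * \<delta> \<le> a"
      proof -
        have "ennreal (r ^ (2*n)) * \<delta> = (\<integral>\<^sup>+ z. ennreal (r ^ (2*n)) * indicator (ball z0 e) z \<partial>M1)"
          unfolding \<delta>_def using ballM by (simp add: nn_integral_cmult_indicator)
        also have "\<dots> \<le> a" unfolding a_def
        proof (intro nn_integral_mono)
          fix z
          show "ennreal (r ^ (2*n)) * indicator (ball z0 e) z \<le> ennreal ((cmod (poly (p^n) z))\<^sup>2)"
          proof (cases "z \<in> ball z0 e")
            case True
            then have "r < cmod (poly p z)" using e by auto
            then have "r ^ (2*n) \<le> cmod (poly p z) ^ (2*n)"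
              using t0 s0 by (intro power_mono) auto
            also have "\<dots> = (cmod (poly (p^n) z))\<^sup>2"
              by (simp add: poly_power norm_power power_mult[symmetric] mult.commute)
            finally show ?thesis using True by simp
          qed simp
        qed
        finally show ?thesis .
      qed
      have uc: "c \<le> ennreal (t ^ (2*n)) * emeasure M2 (space M2)"
      proof -
        have "c \<le> (\<integral>\<^sup>+ z. ennreal (t ^ (2*n)) \<partial>M2)" unfolding c_def
        proof (intro nn_integral_mono_AE)
          show "AE z in M2. ennreal ((cmod (poly (p^n) z))\<^sup>2) \<le> ennreal (t ^ (2*n))"
            using ae_supp[OF assms(2)]
          proof eventually_elim
            case (elim z)
            then have "cmod (poly p z) \<le> t" using sK d0 unfolding K_def t_def by force
            then have "cmod (poly p z) ^ (2*n) \<le> t ^ (2*n)" by (intro power_mono) auto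
            moreover have "cmod (poly p z) ^ (2*n) = (cmod (poly (p^n) z))\<^sup>2"
              by (simp add: poly_power norm_power power_mult[symmetric] mult.commute)
            ultimately show ?case by simp
          qed
        qed
        also have "\<dots> = ennreal (t ^ (2*n)) * emeasure M2 (space M2)" by simp
        finally show ?thesis .
      qed
      have cfin: "c \<noteq> top" using uc Mv by (auto simp: top_unique ennreal_mult[symmetric])
      have "a \<le> beta M1 M2 * c"
        by (rule div_le_imp) (use \<open>a / c \<le> beta M1 M2\<close> cfin Bv in auto)
      then have "ennreal (r ^ (2*n)) * \<delta> \<le> beta M1 M2 * (ennreal (t ^ (2*n)) * emeasure M2 (space M2))"
        using la uc by (meson mult_left_mono order_trans zero_le)
      then show ?thesis using D Bv Mv t0
        by (simp add: ennreal_mult[symmetric] ennreal_le_iff)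
    qed
    define x where "x = (r / t)^2"
    have x1: "x > 1" unfolding x_def using t0 by (simp add: one_less_power)
    obtain n where n: "Bv * Mv / D < x ^ n" using real_arch_pow[OF x1] by blast
    have "x ^ n = r^(2*n) / t^(2*n)" unfolding x_def
      by (simp add: power_mult power_divide)
    with n key[of n] t0 D show False
      by (simp add: field_simps)
  qed
qed

end
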